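(* Let $N\ge1$, $\varphi,\gamma\in(0,1)$ with $\varphi+\gamma\ge1$, $\alpha=\min\{\varphi,\gamma\}$, and $\psi=\varphi/\gamma$ if $\varphi\le\gamma$, $\psi=\bar\varphi/\bar\gamma$ if $\varphi>\gamma$. Let $(X_t)_{t\ge0}$ be generated from $X_0$ and a sequence $(Z_t)_{t\ge1}$ of random elements of $\{0,1\}^N$ (independent of the uniforms) by the following rule: $(U(t,k))_{t,k}$ are i.i.d. Uniform$(0,1)$ and, independently for each $k\in[N]$, if $Z_t[k]=1$ then $X_t[k]=1$ iff $X_{t-1}[k]=0$ or ($X_{t-1}[k]=1$ and $U(t,k)\ge\bar\varphi/\gamma$); if $Z_t[k]=0$ and $\varphi\le\gamma$ then $X_t[k]=0$ iff $X_{t-1}[k]=0$ or ($X_{t-1}[k]=1$ and $U(t,k)\ge\psi$); if $Z_t[k]=0$ and $\varphi>\gamma$ then $X_t[k]=1$ iff $X_{t-1}[k]=1$ or ($X_{t-1}[k]=0$ and $U(t,k)\ge\psi$). Then for $t\in\mathbb{Z}_+$, conditional on $X_0$ and $(Z_\tau)_{\tau\le t}$, the coordinates of $X_t$ are independent and $X_t[k]$ is Bernoulli$(p_t[k])$ with $$p_t[k]=\varphi-(\gamma-\varphi)\sum_{l=1}^t\psi^l\prod_{j=t-l+1}^{t}\Big(1-\frac{Z_j[k]}{\alpha}\Big)-\big(\varphi-X_0[k]\big)\psi^t\prod_{j=1}^t\Big(1-\frac{Z_j[k]}{\alpha}\Big).$$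
   Context: $\bar a=1-a$; $[N]=\{1,\dots,N\}$; $\boldsymbol{x}[k]$ is the $k$-th coordinate of $\boldsymbol{x}\in\{0,1\}^N$. *)

theory Defs
  imports "HOL-Probability.Probability"
begin

definition alpha_par :: "real \<Rightarrow> real \<Rightarrow> real" where
  "alpha_par \<phi> \<gamma> = min \<phi> \<gamma>"

definition psi_par :: "real \<Rightarrow> real \<Rightarrow> real" where
  "psi_par \<phi> \<gamma> = (if \<phi> \<le> \<gamma> then \<phi> / \<gamma> else (1 - \<phi>) / (1 - \<gamma>))"

text \<open>The process, as a deterministic function of the initial state x0, the
  sequence z (z t k = Z_t[k]) and a realisation u of the uniforms (u t k = U(t,k)).
  Coordinates are booleans (True = 1).\<close>
fun Xproc :: "real \<Rightarrow> real \<Rightarrow> (nat \<Rightarrow> bool) \<Rightarrow> (nat \<Rightarrow> nat \<Rightarrow> bool)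
      \<Rightarrow> (nat \<Rightarrow> nat \<Rightarrow> real) \<Rightarrow> nat \<Rightarrow> nat \<Rightarrow> bool" where
  "Xproc \<phi> \<gamma> x0 z u 0 k = x0 k"
| "Xproc \<phi> \<gamma> x0 z u (Suc t) k =
     (let prev = Xproc \<phi> \<gamma> x0 z u t k; v = u (Suc t) k in
      if z (Suc t) k then
        (\<not> prev \<or> (prev \<and> v \<ge> (1 - \<phi>) / \<gamma>))
      else if \<phi> \<le> \<gamma> then
        \<not> (\<not> prev \<or> (prev \<and> v \<ge> psi_par \<phi> \<gamma>))
      else
        (prev \<or> (\<not> prev \<and> v \<ge> psi_par \<phi> \<gamma>)))"

definition p_prob :: "real \<Rightarrow> real \<Rightarrow> (nat \<Rightarrow> bool) \<Rightarrow> (nat \<Rightarrow> nat \<Rightarrow> bool) \<Rightarrow> nat \<Rightarrow> nat \<Rightarrow> real" where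
  "p_prob \<phi> \<gamma> x0 z t k =
     \<phi> - (\<gamma> - \<phi>) * (\<Sum>l = 1..t. psi_par \<phi> \<gamma> ^ l *
              (\<Prod>j = t - l + 1..t. (1 - of_bool (z j k) / alpha_par \<phi> \<gamma>)))
       - (\<phi> - of_bool (x0 k)) * psi_par \<phi> \<gamma> ^ t *
              (\<Prod>j = 1..t. (1 - of_bool (z j k) / alpha_par \<phi> \<gamma>))"

end

theory Submission
  imports Defs
begin

lemma Xproc_cong:
  "(\<And>s. s \<in> {1..t} \<Longrightarrow> u s k = u' s k) \<Longrightarrow> Xproc \<phi> \<gamma> x0 z u t k = Xproc \<phi> \<gamma> x0 z u' t k"
  by (induction t) (auto simp: Let_def)

lemma Xproc_meas:
  fixes u :: "nat \<Rightarrow> nat \<Rightarrow> 'b \<Rightarrow> real"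
  assumes "\<And>s. s \<in> {1..t} \<Longrightarrow> u s k \<in> borel_measurable M'"
  shows "Measurable.pred M' (\<lambda>\<omega>. Xproc \<phi> \<gamma> x0 z (\<lambda>s j. u s j \<omega>) t k)"
  using assms
proof (induction t)
  case 0
  then show ?case by simp
next
  case (Suc t)
  have [measurable]: "u (Suc t) k \<in> borel_measurable M'" using Suc.prems by auto
  have [measurable]: "Measurable.pred M' (\<lambda>\<omega>. Xproc \<phi> \<gamma> x0 z (\<lambda>s j. u s j \<omega>) t k)"
    using Suc by auto
  show ?case by (simp add: Let_def) measurable
qed

lemma p_prob_0: "p_prob \<phi> \<gamma> x0 z 0 k = of_bool (x0 k)"
  by (simp add: p_prob_def)

lemma p_prob_Suc:
  "p_prob \<phi> \<gamma> x0 z (Suc t) k = \<phi> + psi_par \<phi> \<gamma> * (1 - of_bool (z (Suc t) k) / alpha_par \<phi> \<gamma>)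
       * (p_prob \<phi> \<gamma> x0 z t k - \<gamma>)"
proof -
  define c where "c j = (1 - of_bool (z j k) / alpha_par \<phi> \<gamma>)" for j
  define ps where "ps = psi_par \<phi> \<gamma>"
  have S: "(\<Sum>l = 1..Suc t. ps ^ l * (\<Prod>j = Suc t - l + 1..Suc t. c j))
     = ps * c (Suc t) * (1 + (\<Sum>l = 1..t. ps ^ l * (\<Prod>j = t - l + 1..t. c j)))"
  proof -
    have "(\<Sum>l = 1..Suc t. ps ^ l * (\<Prod>j = Suc t - l + 1..Suc t. c j))
        = ps * c (Suc t) + (\<Sum>l = Suc 1..Suc t. ps ^ l * (\<Prod>j = Suc t - l + 1..Suc t. c j))"
      by (subst sum.atLeast_Suc_atMost) auto
    also have "(\<Sum>l = Suc 1..Suc t. ps ^ l * (\<Prod>j = Suc t - l + 1..Suc t. c j))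
       = (\<Sum>l = 1..t. ps ^ Suc l * (\<Prod>j = Suc t - Suc l + 1..Suc t. c j))"
      by (simp only: sum.shift_bounds_cl_Suc_ivl)
    also have "\<dots> = (\<Sum>l = 1..t. ps * c (Suc t) * (ps ^ l * (\<Prod>j = t - l + 1..t. c j)))"
    proof (rule sum.cong[OF refl])
      fix l assume l: "l \<in> {1..t}"
      have "(\<Prod>j = Suc t - Suc l + 1..Suc t. c j) = c (Suc t) * (\<Prod>j = t - l + 1..t. c j)"
        using l by (subst prod.nat_ivl_Suc') auto
      then show "ps ^ Suc l * (\<Prod>j = Suc t - Suc l + 1..Suc t. c j) = ps * c (Suc t) * (ps ^ l * (\<Prod>j = t - l + 1..t. c j))"
        by simp
    qed
    finally show ?thesis by (simp add: sum_distrib_left algebra_simps)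
  qed
  have P: "(\<Prod>j = 1..Suc t. c j) = c (Suc t) * (\<Prod>j = 1..t. c j)"
    by (subst prod.nat_ivl_Suc') auto
  show ?thesis
    unfolding p_prob_def c_def[symmetric] ps_def[symmetric] S P
    by (simp add: algebra_simps)
qed


lemma uniform_lt:
  fixes c :: real
  assumes "0 \<le> c" "c \<le> 1" and Um: "V \<in> borel_measurable M"
    and D: "distr M lborel V = uniform_measure lborel {0<..<1::real}"
  shows "measure M {\<omega> \<in> space M. V \<omega> < c} = c"
proof -
  have Vm: "V \<in> measurable M lborel" using Um by simp
  have "measure M {\<omega> \<in> space M. V \<omega> < c} = measure M (V -` {..<c} \<inter> space M)"
    by (auto intro: arg_cong[where f="measure M"])
  also have "\<dots> = measure (distr M lborel V) {..<c}"
    by (rule measure_distr[symmetric]) (use Vm in auto)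
  also have "\<dots> = measure lborel ({0<..<1} \<inter> {..<c}) / measure lborel {0<..<1::real}"
    unfolding D by (rule measure_uniform_measure) auto
  also have "{0<..<1} \<inter> {..<c} = {0<..<c}" using assms by auto
  finally show ?thesis using assms by simp
qed

theorem proposition3:
  fixes N :: nat and \<phi> \<gamma> :: real
    and M :: "'a measure"
    and U :: "nat \<Rightarrow> nat \<Rightarrow> 'a \<Rightarrow> real"
    and x0 :: "nat \<Rightarrow> bool" and z :: "nat \<Rightarrow> nat \<Rightarrow> bool"
  assumes "N \<ge> 1"
    and "0 < \<phi>" "\<phi> < 1" "0 < \<gamma>" "\<gamma> < 1" "\<phi> + \<gamma> \<ge> 1"
    and "prob_space M"
    and "prob_space.indep_vars M (\<lambda>_. borel) (\<lambda>(t, k). U t k)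
           {(t, k). t \<ge> 1 \<and> k \<in> {1..N}}"
    and "\<And>t k. t \<ge> 1 \<Longrightarrow> k \<in> {1..N} \<Longrightarrow>
           distr M lborel (U t k) = uniform_measure lborel {0<..<1::real}"
  shows "prob_space.indep_vars M (\<lambda>_. count_space UNIV)
           (\<lambda>k \<omega>. Xproc \<phi> \<gamma> x0 z (\<lambda>s j. U s j \<omega>) t k) {1..N}
       \<and> (\<forall>k \<in> {1..N}. measure M {\<omega> \<in> space M. Xproc \<phi> \<gamma> x0 z (\<lambda>s j. U s j \<omega>) t k}
                         = p_prob \<phi> \<gamma> x0 z t k)"
proof -
  interpret P: prob_space M by fact
  define I where "I = {(t::nat, k::nat). t \<ge> 1 \<and> k \<in> {1..N}}"
  define UU where "UU = (\<lambda>(t::nat, k::nat). U t k)"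
  have ind: "P.indep_vars (\<lambda>_. borel) UU I" using assms(8) unfolding I_def UU_def .
  have Um: "U s k \<in> borel_measurable M" if "s \<ge> 1" "k \<in> {1..N}" for s k
  proof -
    have "UU (s, k) \<in> borel_measurable M"
      using ind that unfolding P.indep_vars_def I_def by auto
    then show ?thesis by (simp add: UU_def)
  qed
  define X where "X t k \<omega> = Xproc \<phi> \<gamma> x0 z (\<lambda>s j. U s j \<omega>) t k" for t k \<omega>
  have Xm: "Measurable.pred M (X t k)" if "k \<in> {1..N}" for t k
    unfolding X_def by (rule Xproc_meas) (use Um that in auto)
  have restr: "Xproc \<phi> \<gamma> x0 z (\<lambda>s i. restrict (\<lambda>i. UU i \<omega>) K (s, i)) t k = X t k \<omega>"
    if "\<And>s. s \<in> {1..t} \<Longrightarrow> (s, k) \<in> K" for K t k \<omega>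
    unfolding X_def by (rule Xproc_cong) (use that in \<open>auto simp: UU_def\<close>)
  have compm: "(\<lambda>f. f (s, k)) \<in> borel_measurable (PiM K (\<lambda>_. borel))" if "(s, k) \<in> K" for s k K
    using that by (rule measurable_component_singleton)
  have part1: "P.indep_vars (\<lambda>_. count_space UNIV) (\<lambda>k \<omega>. X t k \<omega>) {1..N}"
  proof -
    define K :: "nat \<Rightarrow> (nat \<times> nat) set" where "K j = {(s, j) | s. 1 \<le> s \<and> s \<le> t}" for j
    have R: "P.indep_vars (\<lambda>j. PiM (K j) (\<lambda>_. borel)) (\<lambda>j \<omega>. restrict (\<lambda>i. UU i \<omega>) (K j)) {1..N}"
      by (rule P.indep_vars_restrict[OF ind]) (auto simp: K_def I_def disjoint_family_on_def)
    have C: "P.indep_vars (\<lambda>_. count_space UNIV)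
        (\<lambda>j \<omega>. Xproc \<phi> \<gamma> x0 z (\<lambda>s i. restrict (\<lambda>i. UU i \<omega>) (K j) (s, i)) t j) {1..N}"
      by (rule P.indep_vars_compose2[OF R, where Y="\<lambda>j f. Xproc \<phi> \<gamma> x0 z (\<lambda>s i. f (s, i)) t j"])
         (rule Xproc_meas, rule compm, auto simp: K_def)
    show ?thesis
      apply (rule P.indep_vars_cong[THEN iffD1, OF _ _ _ C])
        apply simp
       apply (rule ext)
       apply (rule restr)
       apply (simp add: K_def)
      apply simp
      done
  qed
  \<comment> \<open>independence of the past and the new uniform\<close>
  have key: "P.prob {\<omega> \<in> space M. X t k \<omega> \<and> U (Suc t) k \<omega> < c} = P.prob {\<omega> \<in> space M. X t k \<omega>} * c"
    if k: "k \<in> {1..N}" and c: "0 \<le> c" "c \<le> 1" for t k c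
  proof -
    define K :: "nat \<Rightarrow> (nat \<times> nat) set" where "K j = (if j = (0::nat) then {(s, k) | s. 1 \<le> s \<and> s \<le> t} else {(Suc t, k)})" for j
    define G where "G j = (if j = (0::nat) then (\<lambda>f. Xproc \<phi> \<gamma> x0 z (\<lambda>s i. f (s, i)) t k)
       else (\<lambda>f. f (Suc t, k) < c))" for j
    have R: "P.indep_vars (\<lambda>j. PiM (K j) (\<lambda>_. borel)) (\<lambda>j \<omega>. restrict (\<lambda>i. UU i \<omega>) (K j)) {0,1}"
      by (rule P.indep_vars_restrict[OF ind]) (use k in \<open>auto simp: K_def I_def disjoint_family_on_def\<close>)
    have C: "P.indep_vars (\<lambda>_. count_space UNIV)
        (\<lambda>j \<omega>. G j (restrict (\<lambda>i. UU i \<omega>) (K j))) {0,1}"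
    proof (rule P.indep_vars_compose2[OF R])
      fix j :: nat assume j: "j \<in> {0,1}"
      show "G j \<in> measurable (PiM (K j) (\<lambda>_. borel)) (count_space UNIV)"
      proof (cases "j = 0")
        case True
        then show ?thesis unfolding G_def
          by simp (rule Xproc_meas, rule compm, auto simp: K_def)
      next
        case False
        have [measurable]: "(\<lambda>f. f (Suc t, k)) \<in> borel_measurable (PiM (K j) (\<lambda>_. borel))"
          by (rule compm) (use False in \<open>simp add: K_def\<close>)
        show ?thesis using False unfolding G_def by simp measurable
      qed
    qed
    have D: "P.prob (\<Inter>j\<in>{0,1}. (\<lambda>\<omega>. G j (restrict (\<lambda>i. UU i \<omega>) (K j))) -` {True} \<inter> space M)
      = (\<Prod>j\<in>{0,1}. P.prob ((\<lambda>\<omega>. G j (restrict (\<lambda>i. UU i \<omega>) (K j))) -` {True} \<inter> space M))"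
      by (rule P.indep_varsD[OF C]) simp_all
    have E0: "(\<lambda>\<omega>. G 0 (restrict (\<lambda>i. UU i \<omega>) (K 0))) -` {True} \<inter> space M = {\<omega> \<in> space M. X t k \<omega>}"
    proof -
      have "G 0 (restrict (\<lambda>i. UU i \<omega>) (K 0)) = X t k \<omega>" for \<omega>
        unfolding G_def by (subst if_P[OF refl]) (rule restr, simp add: K_def)
      then show ?thesis by auto
    qed
    have E1: "(\<lambda>\<omega>. G (Suc 0) (restrict (\<lambda>i. UU i \<omega>) (K (Suc 0)))) -` {True} \<inter> space M = {\<omega> \<in> space M. U (Suc t) k \<omega> < c}"
      unfolding G_def by (auto simp: K_def UU_def)
    have "P.prob {\<omega> \<in> space M. U (Suc t) k \<omega> < c} = c"
      by (rule uniform_lt[OF c Um assms(9)]) (use k in auto)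
    moreover have "{\<omega> \<in> space M. X t k \<omega> \<and> U (Suc t) k \<omega> < c} =
       {\<omega> \<in> space M. X t k \<omega>} \<inter> {\<omega> \<in> space M. U (Suc t) k \<omega> < c}" by auto
    ultimately show ?thesis using D by (simp add: E0 E1)
  qed
  have part2: "P.prob {\<omega> \<in> space M. X t k \<omega>} = p_prob \<phi> \<gamma> x0 z t k"
    if k: "k \<in> {1..N}" for t k
  proof (induction t)
    case 0
    show ?case by (cases "x0 k") (simp_all add: X_def p_prob_0 P.prob_space)
  next
    case (Suc t)
    define p where "p = P.prob {\<omega> \<in> space M. X t k \<omega>}"
    define ps where "ps = psi_par \<phi> \<gamma>"
    define a where "a = (1 - \<phi>) / \<gamma>"
    have a01: "0 \<le> a" "a \<le> 1" using assms(2-6) by (auto simp: a_def field_simps)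
    have ps01: "0 \<le> ps" "ps \<le> 1" using assms(2-6) by (auto simp: ps_def psi_par_def field_simps)
    have [measurable]: "Measurable.pred M (X t k)" by (rule Xm[OF k])
    have [measurable]: "U (Suc t) k \<in> borel_measurable M" by (rule Um) (use k in auto)
    have Xs: "X (Suc t) k \<omega> = (if z (Suc t) k then \<not> (X t k \<omega> \<and> U (Suc t) k \<omega> < a)
        else if \<phi> \<le> \<gamma> then X t k \<omega> \<and> U (Suc t) k \<omega> < ps
        else \<not> (\<not> X t k \<omega> \<and> U (Suc t) k \<omega> < ps))" for \<omega>
      by (auto simp: X_def Let_def a_def ps_def)
    have Ua: "P.prob {\<omega> \<in> space M. U (Suc t) k \<omega> < ps} = ps"
      by (rule uniform_lt[OF ps01 Um assms(9)]) (use k in auto)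
    have K1: "P.prob {\<omega> \<in> space M. X t k \<omega> \<and> U (Suc t) k \<omega> < a} = p * a"
      unfolding p_def by (rule key[OF k a01])
    have K2: "P.prob {\<omega> \<in> space M. X t k \<omega> \<and> U (Suc t) k \<omega> < ps} = p * ps"
      unfolding p_def by (rule key[OF k ps01])
    have val: "P.prob {\<omega> \<in> space M. X (Suc t) k \<omega>} =
       (if z (Suc t) k then 1 - p * a else if \<phi> \<le> \<gamma> then p * ps else 1 - (ps - p * ps))"
    proof (cases "z (Suc t) k")
      case True
      have "{\<omega> \<in> space M. X (Suc t) k \<omega>} = space M - {\<omega> \<in> space M. X t k \<omega> \<and> U (Suc t) k \<omega> < a}"
        using True by (auto simp: Xs)
      then have "P.prob {\<omega> \<in> space M. X (Suc t) k \<omega>} = 1 - P.prob {\<omega> \<in> space M. X t k \<omega> \<and> U (Suc t) k \<omega> < a}"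
        by (simp add: P.prob_compl)
      then show ?thesis using True K1 by simp
    next
      case False
      show ?thesis
      proof (cases "\<phi> \<le> \<gamma>")
        case True
        have "{\<omega> \<in> space M. X (Suc t) k \<omega>} = {\<omega> \<in> space M. X t k \<omega> \<and> U (Suc t) k \<omega> < ps}"
          using True False by (auto simp: Xs)
        then show ?thesis using True False K2 by simp
      next
        case F2: False
        have "{\<omega> \<in> space M. X (Suc t) k \<omega>} = space M - ({\<omega> \<in> space M. U (Suc t) k \<omega> < ps}
            - {\<omega> \<in> space M. X t k \<omega> \<and> U (Suc t) k \<omega> < ps})"
          using F2 False by (auto simp: Xs)
        moreover have "P.prob ({\<omega> \<in> space M. U (Suc t) k \<omega> < ps}
            - {\<omega> \<in> space M. X t k \<omega> \<and> U (Suc t) k \<omega> < ps}) = ps - p * ps"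
          by (subst P.finite_measure_Diff) (auto simp: Ua K2)
        ultimately show ?thesis using F2 False by (simp add: P.prob_compl)
      qed
    qed
    have IH: "p = p_prob \<phi> \<gamma> x0 z t k" using Suc unfolding p_def .
    show ?case
    proof -
      have g: "1 - \<gamma> \<noteq> 0" "\<gamma> \<noteq> 0" "\<phi> \<noteq> 0" "\<gamma> - \<gamma> * \<gamma> \<noteq> 0" "\<gamma> \<noteq> 1" "1 - \<gamma> > 0" using assms(2-6) by auto
      have g2: "1 + \<gamma> * \<gamma> \<noteq> \<gamma> * 2"
      proof -
        have "(1 - \<gamma>) * (1 - \<gamma>) > 0" using g by simp
        then show ?thesis by (simp add: algebra_simps)
      qed
      show ?thesis
        unfolding val p_prob_Suc IH[symmetric]
        by (cases "z (Suc t) k"; cases "\<phi> \<le> \<gamma>")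
          (simp_all add: a_def ps_def psi_par_def alpha_par_def min_def g field_simps, 
           (simp_all add: g g2 divide_simps; simp add: algebra_simps)?, (simp add: g add_divide_distrib[symmetric] diff_divide_distrib[symmetric] eq_divide_eq algebra_simps)?)
    qed
  qed
  show ?thesis using part1 part2 unfolding X_def by blast
qed

end
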